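(* Let $\epsilon\in(0,1)$, $K\ge3$, $C>K$, $\delta\in(0,1)$, and let $g:[0,1]\to[1,K]$ be non-decreasing. Let $f(\lambda)=\frac{C}{\lambda^2}+\frac{g(\lambda)}{\epsilon^2}$ and let $\lambda^*\in(0,1]$ be a minimizer of $f$. Suppose that evaluating $g$ at $\lambda$ costs $O(C\ln(K/\delta)/\lambda^2)$ samples. Then SolveOpt returns $\hat\lambda$ with $f(\hat\lambda)\le50f(\lambda^* )$ while using at most $O(f(\lambda^* )\ln(K/\delta)\ln(1/\epsilon))$ samples.
   Context: SolveOpt$(\epsilon,K,C,g)$: evaluate $g(1)$; set $U=1$, $L=\sqrt{\frac{C}{C+(g(1)-1)/\epsilon^2}}$, $\lambda=1$; while $\lambda\ge L$: evaluate $g(\lambda)$; if $f(\lambda)<f(U)$, set $U\leftarrow\lambda$ and $L\leftarrow\sqrt{\frac{C}{C/\lambda^2+(g(\lambda)-1)/\epsilon^2}}$; then set $\lambda\leftarrow\lambda/5$. Return $\hat\lambda=U$. *)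

theory Defs
  imports Complex_Main
begin

definition fobj :: "real \<Rightarrow> real \<Rightarrow> (real \<Rightarrow> real) \<Rightarrow> real \<Rightarrow> real" where
  "fobj eps C g lam = C / lam^2 + g lam / eps^2"

text \<open>State (U, L) of SolveOpt before the loop iteration with index k,
  i.e. before processing lambda = (1/5)^k (assuming the loop has not stopped yet).\<close>
fun solve_st :: "real \<Rightarrow> real \<Rightarrow> (real \<Rightarrow> real) \<Rightarrow> nat \<Rightarrow> real \<times> real" where
  "solve_st eps C g 0 = (1, sqrt (C / (C + (g 1 - 1) / eps^2)))"
| "solve_st eps C g (Suc k) =
     (let (U, L) = solve_st eps C g k; lam = (1/5::real)^k in
      if fobj eps C g lam < fobj eps C g U
      then (lam, sqrt (C / (C / lam^2 + (g lam - 1) / eps^2)))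
      else (U, L))"

text \<open>SolveOpt terminates iff some loop test fails; then the number of executed
  loop iterations is the first index k with (1/5)^k < L.\<close>
definition solve_terminates :: "real \<Rightarrow> real \<Rightarrow> (real \<Rightarrow> real) \<Rightarrow> bool" where
  "solve_terminates eps C g = (\<exists>k. (1/5::real)^k < snd (solve_st eps C g k))"

definition solve_iters :: "real \<Rightarrow> real \<Rightarrow> (real \<Rightarrow> real) \<Rightarrow> nat" where
  "solve_iters eps C g = (LEAST k. (1/5::real)^k < snd (solve_st eps C g k))"

definition solve_opt :: "real \<Rightarrow> real \<Rightarrow> (real \<Rightarrow> real) \<Rightarrow> real" where
  "solve_opt eps C g = fst (solve_st eps C g (solve_iters eps C g))"

text \<open>Total samples: one evaluation of g(1) before the loop, plus one evaluation
  of g at (1/5)^k in each executed loop iteration k; cost lam is the number of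
  samples used to evaluate g at lam.\<close>
definition solve_cost :: "(real \<Rightarrow> real) \<Rightarrow> real \<Rightarrow> real \<Rightarrow> (real \<Rightarrow> real) \<Rightarrow> real" where
  "solve_cost cost eps C g = cost 1 + (\<Sum>k<solve_iters eps C g. cost ((1/5::real)^k))"

end

theory Submission
  imports Defs
begin

lemma st_props:
  assumes "0 < eps" "0 < C" "\<forall>x\<in>{0..1}. 1 \<le> g x"
  shows "fst (solve_st eps C g k) \<in> {0<..1} \<and>
    snd (solve_st eps C g k) = sqrt (C / (fobj eps C g (fst (solve_st eps C g k)) - 1/eps^2)) \<and>
    (\<forall>j<k. fobj eps C g (fst (solve_st eps C g k)) \<le> fobj eps C g ((1/5)^j)) \<and>
    fobj eps C g (fst (solve_st eps C g k)) \<le> fobj eps C g 1"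
proof (induction k)
  case 0
  then show ?case by (simp add: fobj_def diff_divide_distrib)
next
  case (Suc k)
  obtain U L where UL: "solve_st eps C g k = (U, L)" by fastforce
  define lam where "lam = (1/5::real)^k"
  have lam: "lam \<in> {0<..1}" unfolding lam_def by (simp add: power_le_one)
  have fl: "fobj eps C g lam - 1/eps^2 = C / lam^2 + (g lam - 1) / eps^2"
    by (simp add: fobj_def diff_divide_distrib)
  show ?case
  proof (cases "fobj eps C g lam < fobj eps C g U")
    case True
    then have st: "solve_st eps C g (Suc k) = (lam, sqrt (C / (C / lam^2 + (g lam - 1) / eps^2)))"
      using UL by (simp add: lam_def Let_def)
    show ?thesis unfolding st using Suc.IH UL lam fl True
      by (auto simp: less_Suc_eq lam_def)
  next
    case False
    then have st: "solve_st eps C g (Suc k) = (U, L)"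
      using UL by (simp add: lam_def Let_def)
    show ?thesis unfolding st using Suc.IH UL lam False
      by (auto simp: less_Suc_eq lam_def)
  qed
qed

lemma step_mono:
  "fobj eps C g (fst (solve_st eps C g (Suc k))) \<le> fobj eps C g (fst (solve_st eps C g k))"
  by (auto simp: Let_def split: prod.splits)

lemma sqrt_char:
  assumes "0 < x" "0 < D" "0 < C"
  shows "x < sqrt (C / D) \<longleftrightarrow> D < C / x^2"
proof -
  have "x < sqrt (C / D) \<longleftrightarrow> x^2 < C / D"
    using assms by (metis less_eq_real_def real_less_rsqrt real_sqrt_less_iff real_sqrt_power_even
        real_sqrt_abs abs_of_pos even_numeral power2_eq_square real_sqrt_mult_self)
  also have "\<dots> \<longleftrightarrow> D < C / x^2" using assms by (simp add: field_simps)
  finally show ?thesis .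
qed

lemma geom25: "(\<Sum>k<N. (25::real)^k) = (25^N - 1) / 24"
  by (induction N) (auto simp: field_simps)

lemma t_sq: "C / ((1/5::real)^k)^2 = C * 25^k"
proof -
  have "((1/5::real)^k)^2 = (1/25)^k"
  proof -
    have "((1/5::real)^k)^2 = ((1/5)^2)^k" by (simp flip: power_mult add: mult.commute)
    thus ?thesis by (simp add: power2_eq_square)
  qed
  thus ?thesis by (simp add: power_divide)
qed

lemma lin25: "(a::real) \<le> b \<Longrightarrow> c \<le> 25 * d \<Longrightarrow> e \<le> b \<Longrightarrow> 0 < e \<Longrightarrow> c + a \<le> 25 * (d + b)"
  by (smt (verit))

theorem theoremB3:
  fixes c\<^sub>g :: real
  assumes "c\<^sub>g > 0"
  shows "\<exists>c::real. \<forall>eps K C \<delta> (g::real \<Rightarrow> real) lstar (cost::real \<Rightarrow> real).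
     0 < eps \<and> eps < 1 \<and> K \<ge> 3 \<and> C > K \<and> 0 < \<delta> \<and> \<delta> < 1 \<and>
     (\<forall>x\<in>{0..1}. 1 \<le> g x \<and> g x \<le> K) \<and> mono_on {0..1} g \<and>
     lstar \<in> {0<..1} \<and> (\<forall>lam\<in>{0<..1}. fobj eps C g lstar \<le> fobj eps C g lam) \<and>
     (\<forall>lam\<in>{0<..1}. cost lam \<le> c\<^sub>g * C * ln (K / \<delta>) / lam^2)
     \<longrightarrow> solve_terminates eps C g \<and>
         fobj eps C g (solve_opt eps C g) \<le> 50 * fobj eps C g lstar \<and>
         solve_cost cost eps C g \<le> c * fobj eps C g lstar * ln (K / \<delta>) * (1 + ln (1 / eps))"
proof (intro exI[of _ "28 * c\<^sub>g"] allI impI, elim conjE)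
  fix eps K C \<delta> and g :: "real \<Rightarrow> real" and lstar and cost :: "real \<Rightarrow> real"
  assume eps: "0 < eps" "eps < 1" and K: "K \<ge> 3" and CK: "C > K" and dl: "0 < \<delta>" "\<delta> < 1"
    and gb: "\<forall>x\<in>{0..1}. 1 \<le> g x \<and> g x \<le> K" and gm: "mono_on {0..1} g"
    and ls: "lstar \<in> {0<..1}" and opt: "\<forall>lam\<in>{0<..1}. fobj eps C g lstar \<le> fobj eps C g lam"
    and cst: "\<forall>lam\<in>{0<..1}. cost lam \<le> c\<^sub>g * C * ln (K / \<delta>) / lam^2"
  define F where "F = fobj eps C g"
  define S where "S = solve_st eps C g"
  define t where "t = (\<lambda>k::nat. (1/5::real)^k)"
  define D where "D = (\<lambda>k. F (fst (S k)) - 1/eps^2)"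
  define fs where "fs = F lstar"
  define P where "P = (\<lambda>k. t k < snd (S k))"
  have C0: "0 < C" using K CK by linarith
  have g1: "\<forall>x\<in>{0..1}. 1 \<le> g x" using gb by blast
  note SP = st_props[OF eps(1) C0 g1]
  have tpos: "0 < t k" "t k \<le> 1" for k unfolding t_def by (auto simp: power_le_one)
  have tsq: "C / (t k)^2 = C * 25^k" for k unfolding t_def by (rule t_sq)
  have Dge: "D k \<ge> C" for k
  proof -
    obtain U where U: "fst (S k) = U" by blast
    have Ur: "U \<in> {0<..1}" using SP[of k] U S_def by auto
    have "1 \<le> g U" using g1 Ur by auto
    hence "D k \<ge> C / U^2" unfolding D_def F_def fobj_def U using eps
      by (simp add: diff_divide_distrib[symmetric] U)
    moreover have "C / U^2 \<ge> C" using Ur C0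
      by (simp add: field_simps power_le_one)
    ultimately show ?thesis by linarith
  qed
  have Lchar: "P k \<longleftrightarrow> D k < C * 25^k" for k
  proof -
    have "snd (S k) = sqrt (C / D k)" using SP[of k] unfolding S_def D_def F_def by auto
    moreover have "D k > 0" using Dge[of k] C0 by linarith
    ultimately show ?thesis unfolding P_def using sqrt_char[OF tpos(1) _ C0] tsq by simp
  qed
  have Dmono: "D k \<le> D 0" for k
  proof (induction k)
    case (Suc k)
    have "F (fst (S (Suc k))) \<le> F (fst (S k))" unfolding F_def S_def by (rule step_mono)
    then show ?case using Suc unfolding D_def by linarith
  qed simp
  have Dle: "j < k \<Longrightarrow> D k \<le> F (t j) - 1/eps^2" for j k
    using SP[of k] unfolding D_def F_def S_def t_def by auto
  obtain k0 where k0: "D 0 / C < 25^k0"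
    using real_arch_pow[of "25::real" "D 0 / C"] by auto
  have "P k0" unfolding Lchar using Dmono[of k0] k0 C0 by (simp add: field_simps)
  hence exP: "\<exists>k. P k" by blast
  have terminates: "solve_terminates eps C g"
    using exP unfolding solve_terminates_def P_def S_def t_def by blast
  define N where "N = (LEAST k. P k)"
  have PN: "P N" unfolding N_def using exP by (rule LeastI_ex)
  have notP: "k < N \<Longrightarrow> \<not> P k" for k unfolding N_def by (rule not_less_Least)
  have N_eq: "solve_iters eps C g = N"
    unfolding N_def solve_iters_def P_def S_def t_def by simp
  obtain j0 where j0: "1 / lstar < 5^j0"
    using real_arch_pow[of "5::real" "1 / lstar"] by auto
  have "t j0 < lstar" using j0 ls unfolding t_def by (simp add: field_simps power_divide)
  hence exj: "\<exists>j. t j < lstar" by blast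
  define j where "j = (LEAST j. t j < lstar)"
  have tj_lt: "t j < lstar" unfolding j_def using exj by (rule LeastI_ex)
  have j0': "j \<noteq> 0" using tj_lt ls unfolding t_def by (cases j) auto
  have "\<not> t (j - 1) < lstar" unfolding j_def using j0' by (intro not_less_Least) (simp add: j_def)
  moreover have "t j = t (j - 1) / 5" using j0' unfolding t_def
    by (metis One_nat_def Suc_pred bot_nat_0.not_eq_extremum power_Suc2 divide_inverse mult_1 inverse_eq_divide)
  ultimately have tj_ge: "t j \<ge> lstar / 5" by linarith
  have ls0: "0 < lstar" "lstar \<le> 1" using ls by auto
  have gls: "1 \<le> g lstar" using g1 ls by auto
  have fs_eq: "fs = C / lstar^2 + g lstar / eps^2" unfolding fs_def F_def fobj_def by simp
  have Cls: "C / lstar^2 \<ge> C" using ls0 C0 by (simp add: field_simps power_le_one)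
  have gpos: "g lstar / eps^2 \<ge> 1 / eps^2" using gls eps by (simp add: divide_right_mono)
  have e2: "1 / eps^2 > 0" using eps by simp
  have key: "x \<ge> lstar / 5 \<Longrightarrow> C / x^2 \<le> 25 * (C / lstar^2)" for x
  proof -
    assume x: "x \<ge> lstar / 5"
    have "(lstar/5)^2 \<le> x^2" using x ls0 by (intro power_mono) auto
    hence "C / x^2 \<le> C / (lstar/5)^2" using C0 ls0 x by (intro divide_left_mono mult_pos_pos) auto
    also have "\<dots> = 25 * (C / lstar^2)" by (simp add: power_divide)
    finally show ?thesis .
  qed
  have Ftj: "F (t j) \<le> 25 * fs"
  proof -
    have "g (t j) \<le> g lstar" using gm tj_lt tpos[of j] ls0
      by (intro mono_onD[OF gm]) auto
    hence "g (t j) / eps^2 \<le> g lstar / eps^2" by (simp add: divide_right_mono)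
    moreover have "C / (t j)^2 \<le> 25 * (C / lstar^2)" using key tj_ge by blast
    ultimately show ?thesis unfolding F_def fobj_def fs_eq using gpos e2 by (intro lin25)
  qed
  have approx: "F (fst (S N)) \<le> 25 * fs"
  proof (cases "j < N")
    case True
    then have "D N \<le> F (t j) - 1/eps^2" by (rule Dle)
    then show ?thesis using Ftj unfolding D_def using e2 by (smt (verit))
  next
    case False
    then have "t j \<le> t N" unfolding t_def by (intro power_decreasing) auto
    hence "t N \<ge> lstar / 5" using tj_ge by linarith
    hence "C / (t N)^2 \<le> 25 * (C / lstar^2)" by (rule key)
    moreover have "D N < C / (t N)^2" using PN Lchar tsq by simp
    ultimately show ?thesis unfolding D_def fs_eq using gpos e2 by (smt (verit))
  qed
  have N1: "N \<ge> 1"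
  proof (rule ccontr)
    assume "\<not> N \<ge> 1" hence "N = 0" by simp
    thus False using PN Lchar[of 0] Dge[of 0] by simp
  qed
  define n where "n = N - 1"
  have Nn: "N = Suc n" using N1 n_def by simp
  have Dn: "D n \<ge> C * 25^n" using notP[of n] Lchar[of n] Nn by simp
  have Cn: "C * 25^n \<le> 25 * fs"
  proof (cases "n \<le> j")
    case True
    then have "t j \<le> t n" unfolding t_def by (intro power_decreasing) auto
    hence "t n \<ge> lstar / 5" using tj_ge by linarith
    hence "C / (t n)^2 \<le> 25 * (C / lstar^2)" by (rule key)
    thus ?thesis using tsq[of n] fs_eq gpos e2 by (smt (verit))
  next
    case False
    then have "D n \<le> F (t j) - 1/eps^2" by (intro Dle) simp
    thus ?thesis using Dn Ftj e2 by (smt (verit))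
  qed
  have lnK: "ln (K / \<delta>) > 0" using K dl by (simp add: field_simps)
  define A where "A = c\<^sub>g * ln (K / \<delta>)"
  have A0: "A > 0" unfolding A_def using assms lnK by simp
  have cost_t: "cost (t k) \<le> A * (C * 25^k)" for k
  proof -
    have "cost (t k) \<le> c\<^sub>g * C * ln (K / \<delta>) / (t k)^2" using cst tpos[of k] by auto
    also have "\<dots> = A * (C / (t k)^2)" unfolding A_def by simp
    finally show ?thesis using tsq[of k] by simp
  qed
  have "(\<Sum>k<N. cost (t k)) \<le> (\<Sum>k<N. A * (C * 25^k))"
    by (intro sum_mono cost_t)
  also have "\<dots> = A * C * ((25^N - 1) / 24)"
    by (simp add: sum_distrib_left[symmetric] geom25 mult.assoc)
  also have "\<dots> \<le> A * (C * 25^N / 24)" using A0 C0 by (simp add: field_simps)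
  also have "\<dots> = A * (25 * (C * 25^n) / 24)" by (simp add: Nn)
  also have "\<dots> \<le> A * (625 * fs / 24)" using Cn A0 by (intro mult_left_mono) auto
  finally have sumb: "(\<Sum>k<N. cost (t k)) \<le> A * (625 * fs / 24)" .
  have c1: "cost 1 \<le> A * C" using cst[rule_format, of 1] unfolding A_def by (simp add: mult_ac)
  have Cfs: "C \<le> fs" using fs_eq Cls gpos e2 by (smt (verit))
  have fs0: "fs > 0" using Cfs C0 by linarith
  have "solve_cost cost eps C g = cost 1 + (\<Sum>k<N. cost (t k))"
    unfolding solve_cost_def N_eq t_def by simp
  also have "\<dots> \<le> A * fs + A * (625 * fs / 24)"
    using c1 sumb Cfs A0 by (smt (verit) mult_left_mono)
  also have "\<dots> \<le> 28 * A * fs" using A0 fs0 by (simp add: field_simps)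
  also have "\<dots> \<le> 28 * A * fs * (1 + ln (1 / eps))"
  proof -
    have "ln (1 / eps) \<ge> 0" using eps by (simp add: ln_div)
    thus ?thesis using A0 fs0 by (simp add: field_simps)
  qed
  also have "\<dots> = 28 * c\<^sub>g * fs * ln (K / \<delta>) * (1 + ln (1 / eps))"
    unfolding A_def by simp
  finally have costb: "solve_cost cost eps C g \<le> 28 * c\<^sub>g * fobj eps C g lstar * ln (K / \<delta>) * (1 + ln (1 / eps))"
    unfolding fs_def F_def .
  have "solve_opt eps C g = fst (S N)" unfolding solve_opt_def N_eq S_def by simp
  hence "fobj eps C g (solve_opt eps C g) \<le> 50 * fobj eps C g lstar"
    using approx fs0 unfolding F_def fs_def by simp
  thus "solve_terminates eps C g \<and>
         fobj eps C g (solve_opt eps C g) \<le> 50 * fobj eps C g lstar \<and>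
         solve_cost cost eps C g \<le> 28 * c\<^sub>g * fobj eps C g lstar * ln (K / \<delta>) * (1 + ln (1 / eps))"
    using terminates costb by blast
qed

end
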